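(* Let $\mathcal E:l+m\to l+n$ be an roPG and $i\in[m]$. Then $[\![\pi^{\mathrm{tr}^l_{m,n}(\mathcal E)}_i]\!]=[\![v^{\mathcal E}_i]\!]$, where $v^{\mathcal E}_i$ is the traced denotation of plays of $\mathcal E$ from $i$.
   Context: Notation: $[k]=\{1,\dots,k\}$; $X+Y$ disjoint union. An roMPG $\mathcal A:m\to n$ is a tuple $(m,n,Q,E,\rho,w)$: $Q$ finite set of positions, entrances $[m]$, exits $[n]$ (pairwise disjoint with $Q$), edges $E\subseteq([m]+Q)\times([n]+Q)$ with each entrance having exactly one successor and each exit at most one predecessor, $\rho:Q\to\{\exists,\forall\}$, $w:Q\to\mathbb R$. An roPG is an roMPG in which each element of $[m]+Q$ has at most one successor. For $\mathcal E:l+m\to l+n$, the trace $\mathrm{tr}^l_{m,n}(\mathcal E):m\to n$ has the positions, roles and weights of $\mathcal E$, and $(s,s')\in([m]+Q)\times([n]+Q)$ is an edge iff there exist $k\ge0$ and $i_1,\dots,i_k\in[l]$ with $(\hat s,i_1),(i_1,i_2),\dots,(i_k,\hat s')\in E^{\mathcal E}$ (for $k=0$: $(\hat s,\hat s')\in E^{\mathcal E}$), where $i_j$ is read as an exit when the target and as an entrance when the source of an edge, and $\hat s=l+s$ if $s$ is an entrance/exit, $\hat s=s$ if $s\in Q$. Plays: for an roPG $\mathcal C:m\to n$ and entrance $i$, $\pi^{\mathcal C}_i=(s_j)_{j\in J}$ ($J=\{0,..,M\}$ or $\mathbb N$) is the unique maximal sequence with $s_0=i$ and $(s_j,s_{j+1})\in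 E$. An infinite play satisfies the MP condition if $\liminf_N\frac1N\sum_{j=1}^Nw(s_j)\ge0$. $T(X)=X+\mathbb R\times X+\{\exists^*,\forall^*\}$. Denotation $[\![\pi]\!]\in T([n])$: $s_1$ if $J=\{0,1\}$ and $s_1$ is an exit; $(\sum_{j=1}^{M-1}w(s_j),s_M)$ if $M\ge2$ and $s_M$ is an exit; $\exists^*$ if $J$ finite and $s_M$ is a $\forall$-position, or $J$ infinite satisfying MP; $\forall^*$ if $J$ finite and $s_M$ is an $\exists$-position, or $J$ infinite failing MP. Traced denotation of plays (TDP). For the roPG $\mathcal E:l+m\to l+n$ let $f(j)=[\![\pi^{\mathcal E}_j]\!]\in T([l+n])$ for $j\in[l+m]$. The TDP $v^{\mathcal E}_i$ is the sequence with $v_0=l+i$ (the entrance corresponding to $i$) and: if $j=0$ or $v_j\in[l]$ then $v_{j+1}=f(v_j)$; if $v_j=(r,k)$ with $k\in[l]$ then $v_{j+1}=f(k)$; otherwise (i.e. $j\ge1$ and $v_j\in\{l+1,..,l+n\}\cup\mathbb R\times\{l+1,..,l+n\}\cup\{\exists^*,\forall^*\}$) the sequence stops at $v_j$. Its denotation $[\![v]\!]\in T([n])$: if $v=(v_0,..,v_K)$ is finite, let $S$ be the sum of the first components of all $v_j\in\mathbb R\times[l+n]$, $1\le j\le K$; then $[\![v]\!]=v_K$ if $v_K\in\{\exists^*,\forall^*\}$; $=k$ if $v_K=l+k$ and $v_j\in[l]$ for all $1\le j<K$; $=(S,k)$ if $v_K=l+k$ and some $v_j$ ($1\le j<K$)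 lies in $\mathbb R\times[l]$; $=(S,k)$ if $v_K=(r,l+k)$. If $v$ is infinite, then all $v_j$ ($j\ge1$) lie in $[l]\cup\mathbb R\times[l]$ and infinitely many lie in $\mathbb R\times[l]$; let $w'_1,w'_2,\dots$ be their first components in order; $v$ satisfies the MP condition if $\liminf_N\frac1N\sum_{t=1}^Nw'_t\ge0$, and $[\![v]\!]=\exists^*$ if so, $\forall^*$ otherwise. *)

theory Defs
  imports "HOL-Analysis.Analysis"
begin

datatype player = PEx | PAll

(* Nodes of a game: entrances, exits (both 1-indexed naturals) and positions *)
datatype 'q node = Entr nat | Exit nat | Pos 'q

record 'q roMPG =
  ent   :: nat
  ex    :: nat
  pos   :: "'q set"
  edges :: "('q node \<times> 'q node) set"
  role  :: "'q \<Rightarrow> player"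
  wt    :: "'q \<Rightarrow> real"

definition srcs :: "nat \<Rightarrow> 'q set \<Rightarrow> 'q node set" where
  "srcs m Q = Entr ` {1..m} \<union> Pos ` Q"

definition tgts :: "nat \<Rightarrow> 'q set \<Rightarrow> 'q node set" where
  "tgts n Q = Exit ` {1..n} \<union> Pos ` Q"

definition is_roMPG :: "'q roMPG \<Rightarrow> bool" where
  "is_roMPG A \<longleftrightarrow> finite (pos A)
     \<and> edges A \<subseteq> srcs (ent A) (pos A) \<times> tgts (ex A) (pos A)
     \<and> (\<forall>i\<in>{1..ent A}. \<exists>!t. (Entr i, t) \<in> edges A)
     \<and> (\<forall>k\<in>{1..ex A}. \<forall>s s'. (s, Exit k) \<in> edges A \<longrightarrow> (s', Exit k) \<in> edges A \<longrightarrow> s = s')"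

definition is_roPG :: "'q roMPG \<Rightarrow> bool" where
  "is_roPG A \<longleftrightarrow> is_roMPG A
     \<and> (\<forall>s t t'. (s, t) \<in> edges A \<longrightarrow> (s, t') \<in> edges A \<longrightarrow> t = t')"

fun hat :: "nat \<Rightarrow> 'q node \<Rightarrow> 'q node" where
  "hat l (Entr i) = Entr (l + i)"
| "hat l (Exit k) = Exit (l + k)"
| "hat l (Pos q) = Pos q"

fun chain :: "('q node \<times> 'q node) set \<Rightarrow> 'q node \<Rightarrow> nat list \<Rightarrow> 'q node \<Rightarrow> bool" where
  "chain E x [] y \<longleftrightarrow> (x, y) \<in> E"
| "chain E x (i # is) y \<longleftrightarrow> (x, Exit i) \<in> E \<and> chain E (Entr i) is y"

definition trace :: "nat \<Rightarrow> nat \<Rightarrow> nat \<Rightarrow> 'q roMPG \<Rightarrow> 'q roMPG" where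
  "trace l m n A = \<lparr> ent = m, ex = n, pos = pos A,
     edges = {(s, t). s \<in> srcs m (pos A) \<and> t \<in> tgts n (pos A) \<and>
                (\<exists>is. set is \<subseteq> {1..l} \<and> chain (edges A) (hat l s) is (hat l t))},
     role = role A, wt = wt A \<rparr>"

datatype 'x T = Plain 'x | Weighted real 'x | EStar | AStar

(* mean-payoff condition for a sequence indexed from 1 *)
definition mp_ok :: "(nat \<Rightarrow> real) \<Rightarrow> bool" where
  "mp_ok x \<longleftrightarrow> liminf (\<lambda>N. ereal ((\<Sum>j=1..N. x j) / real N)) \<ge> 0"

definition succ :: "'q roMPG \<Rightarrow> 'q node \<Rightarrow> 'q node option" where
  "succ A s = (if \<exists>t. (s, t) \<in> edges A then Some (THE t. (s, t) \<in> edges A) else None)"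

(* the play from entrance i: play A i j = Some s_j for j in J, None outside J *)
primrec play :: "'q roMPG \<Rightarrow> nat \<Rightarrow> nat \<Rightarrow> 'q node option" where
  "play A i 0 = Some (Entr i)"
| "play A i (Suc j) = Option.bind (play A i j) (succ A)"

fun posw :: "'q roMPG \<Rightarrow> 'q node \<Rightarrow> real" where
  "posw A (Pos q) = wt A q"
| "posw A _ = 0"

definition play_den :: "'q roMPG \<Rightarrow> nat \<Rightarrow> nat T" where
  "play_den A i =
    (if \<exists>j. play A i j = None then
       (let M = (LEAST j. play A i (Suc j) = None) in
        case the (play A i M) of
          Exit k \<Rightarrow> (if M = 1 then Plain k
                     else if M \<ge> 2 then Weighted (\<Sum>j=1..M-1. posw A (the (play A i j))) k
                     else undefined)
        | Pos q \<Rightarrow> (if role A q = PAll then EStar else AStar)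
        | Entr _ \<Rightarrow> undefined)
     else (if mp_ok (\<lambda>j. posw A (the (play A i j))) then EStar else AStar))"

fun tstep :: "nat \<Rightarrow> (nat \<Rightarrow> nat T) \<Rightarrow> nat T \<Rightarrow> nat T option" where
  "tstep l f (Plain k) = (if k \<in> {1..l} then Some (f k) else None)"
| "tstep l f (Weighted r k) = (if k \<in> {1..l} then Some (f k) else None)"
| "tstep l f _ = None"

(* v 0 = l+i (represented as Plain (l+i)); v j = Some v_j for j in index set, None outside *)
primrec tdp :: "nat \<Rightarrow> (nat \<Rightarrow> nat T) \<Rightarrow> nat \<Rightarrow> nat \<Rightarrow> nat T option" where
  "tdp l f i 0 = Some (Plain (l + i))"
| "tdp l f i (Suc j) = (if j = 0 then Some (f (l + i)) else Option.bind (tdp l f i j) (tstep l f))"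

fun twt :: "nat T \<Rightarrow> real" where
  "twt (Weighted r k) = r"
| "twt _ = 0"

definition in_l :: "nat \<Rightarrow> nat T \<Rightarrow> bool" where
  "in_l l x \<longleftrightarrow> (\<exists>k\<in>{1..l}. x = Plain k)"

definition weighted_l :: "nat \<Rightarrow> nat T \<Rightarrow> bool" where
  "weighted_l l x \<longleftrightarrow> (\<exists>r. \<exists>k\<in>{1..l}. x = Weighted r k)"

definition tdp_den :: "nat \<Rightarrow> (nat \<Rightarrow> nat T option) \<Rightarrow> nat T" where
  "tdp_den l v =
    (if \<exists>j. v j = None then
       (let K = (LEAST j. v (Suc j) = None);
            S = (\<Sum>j=1..K. twt (the (v j))) in
        case the (v K) of
          EStar \<Rightarrow> EStar
        | AStar \<Rightarrow> AStar
        | Plain x \<Rightarrow> (if x > l \<and> (\<forall>j\<in>{1..<K}. in_l l (the (v j))) then Plain (x - l)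
                     else if x > l \<and> (\<exists>j\<in>{1..<K}. weighted_l l (the (v j))) then Weighted S (x - l)
                     else undefined)
        | Weighted r x \<Rightarrow> (if x > l then Weighted S (x - l) else undefined))
     else
       (let J = {j. j \<ge> 1 \<and> weighted_l l (the (v j))};
            w' = (\<lambda>t. twt (the (v (Infinite_Set.enumerate J (t - 1))))) in
        if infinite J \<and> mp_ok w' then EStar else AStar))"

end

theory Submission
  imports Defs
begin

lemma mp_ok_iff:
  "mp_ok x \<longleftrightarrow> (\<forall>e>0. \<exists>N0. \<forall>N\<ge>N0. - e * real N \<le> (\<Sum>j=1..N. x j))"
proof
  assume h: "mp_ok x"
  show "\<forall>e>0. \<exists>N0. \<forall>N\<ge>N0. - e * real N \<le> (\<Sum>j=1..N. x j)"
  proof (intro allI impI)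
    fix e :: real assume e: "e > 0"
    have "ereal (-e) < 0" using e by simp
    with h have "eventually (\<lambda>N. ereal (-e) < ereal ((\<Sum>j=1..N. x j) / real N)) sequentially"
      unfolding mp_ok_def le_Liminf_iff by blast
    then obtain N0 where N0: "\<And>N. N \<ge> N0 \<Longrightarrow> -e < (\<Sum>j=1..N. x j) / real N"
      by (auto simp: eventually_sequentially)
    show "\<exists>N0. \<forall>N\<ge>N0. - e * real N \<le> (\<Sum>j=1..N. x j)"
    proof (intro exI allI impI)
      fix N assume "N \<ge> max N0 1"
      then have "-e < (\<Sum>j=1..N. x j) / real N" "N \<ge> 1" using N0 by auto
      then show "- e * real N \<le> (\<Sum>j=1..N. x j)" by (simp add: field_simps)
    qed
  qed
next
  assume h: "\<forall>e>0. \<exists>N0. \<forall>N\<ge>N0. - e * real N \<le> (\<Sum>j=1..N. x j)"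
  show "mp_ok x"
    unfolding mp_ok_def le_Liminf_iff
  proof (intro allI impI)
    fix y :: ereal assume y: "y < 0"
    show "eventually (\<lambda>N. y < ereal ((\<Sum>j=1..N. x j) / real N)) sequentially"
    proof (cases y)
      case (real r)
      with y have r: "r < 0" by simp
      obtain N0 where N0: "\<And>N. N \<ge> N0 \<Longrightarrow> (r/2) * real N \<le> (\<Sum>j=1..N. x j)"
        using h[rule_format, of "-r/2"] r by auto
      show ?thesis unfolding eventually_sequentially
      proof (intro exI allI impI)
        fix N assume "N \<ge> max N0 1"
        then have a: "(r/2) * real N \<le> (\<Sum>j=1..N. x j)" and b: "real N \<ge> 1" using N0 by auto
        have "r < r/2" using r by simp
        also have "r/2 \<le> (\<Sum>j=1..N. x j) / real N" using a b by (simp add: field_simps)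
        finally show "y < ereal ((\<Sum>j=1..N. x j) / real N)" using real by simp
      qed
    next
      case PInf with y show ?thesis by simp
    next
      case MInf then show ?thesis by simp
    qed
  qed
qed


lemma sum_split_nat:
  fixes f :: "nat \<Rightarrow> real"
  assumes "a \<le> b"
  shows "(\<Sum>j=1..b. f j) = (\<Sum>j=1..a. f j) + (\<Sum>j=Suc a..b. f j)"
proof -
  have "{1..b} = {1..a} \<union> {Suc a..b}" using assms by auto
  moreover have "{1..a} \<inter> {Suc a..b} = {}" by auto
  ultimately show ?thesis by (simp add: sum.union_disjoint)
qed

lemma sum_shift_nat:
  fixes f :: "nat \<Rightarrow> real"
  shows "(\<Sum>j=1..a+b. f j) = (\<Sum>j=1..a. f j) + (\<Sum>r=1..b. f (a + r))"
proof (induction b)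
  case 0 then show ?case by simp
next
  case (Suc b) then show ?case by simp
qed

lemma mp_ok_shift:
  fixes x y :: "nat \<Rightarrow> real"
  assumes h: "\<And>N. (\<Sum>j=1..N+d. x j) = P + (\<Sum>j=1..N. y j)"
  shows "mp_ok x \<longleftrightarrow> mp_ok y"
proof
  assume "mp_ok x"
  then have hx: "\<forall>e>0. \<exists>N0. \<forall>N\<ge>N0. - e * real N \<le> (\<Sum>j=1..N. x j)" by (simp add: mp_ok_iff)
  show "mp_ok y" unfolding mp_ok_iff
  proof (intro allI impI)
    fix e :: real assume e: "e > 0"
    obtain N0 where N0: "\<And>N. N \<ge> N0 \<Longrightarrow> - (e/2) * real N \<le> (\<Sum>j=1..N. x j)"
      using hx e by (meson half_gt_zero)
    define N1 where "N1 = max N0 (d + nat \<lceil>2 * \<bar>P\<bar> / e\<rceil>)"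
    show "\<exists>N0. \<forall>N\<ge>N0. - e * real N \<le> (\<Sum>j=1..N. y j)"
    proof (intro exI allI impI)
      fix N assume N: "N \<ge> N1"
      have "N + d \<ge> N0" using N N1_def by auto
      then have a: "- (e/2) * real (N + d) \<le> (\<Sum>j=1..N+d. x j)" using N0 by blast
      have "real N \<ge> 2 * \<bar>P\<bar> / e + d" using N N1_def by linarith
      then have "e * real N \<ge> 2 * \<bar>P\<bar> + e * d" using e by (simp add: field_simps)
      moreover have "e * real (N + d) = e * real N + e * real d" by (simp add: distrib_left)
      ultimately show "- e * real N \<le> (\<Sum>j=1..N. y j)" using a h[of N] abs_ge_self[of P] by linarith
    qed
  qed
next
  assume "mp_ok y"
  then have hy: "\<forall>e>0. \<exists>N0. \<forall>N\<ge>N0. - e * real N \<le> (\<Sum>j=1..N. y j)" by (simp add: mp_ok_iff)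
  show "mp_ok x" unfolding mp_ok_iff
  proof (intro allI impI)
    fix e :: real assume e: "e > 0"
    obtain N0 where N0: "\<And>N. N \<ge> N0 \<Longrightarrow> - (e/2) * real N \<le> (\<Sum>j=1..N. y j)"
      using hy e by (meson half_gt_zero)
    define N1 where "N1 = N0 + d + nat \<lceil>2 * \<bar>P\<bar> / e\<rceil>"
    show "\<exists>N0. \<forall>N\<ge>N0. - e * real N \<le> (\<Sum>j=1..N. x j)"
    proof (intro exI allI impI)
      fix N assume N: "N \<ge> N1"
      define M where "M = N - d"
      have NM: "N = M + d" using N N1_def M_def by auto
      have "M \<ge> N0" using N N1_def M_def by auto
      then have a: "- (e/2) * real M \<le> (\<Sum>j=1..M. y j)" using N0 by blast
      have "real N \<ge> 2 * \<bar>P\<bar> / e" using N N1_def by linarith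
      then have "e * real N \<ge> 2 * \<bar>P\<bar>" using e by (simp add: field_simps)
      moreover have "real M \<le> real N" using NM by simp
      moreover have "e * real M \<le> e * real N" using e \<open>real M \<le> real N\<close> by simp
      ultimately show "- e * real N \<le> (\<Sum>j=1..N. x j)" using a h[of M] NM abs_ge_self[of P] abs_ge_minus_self[of P]
        by simp
    qed
  qed
qed

lemma mp_ok_group:
  fixes x w :: "nat \<Rightarrow> real" and c :: "nat \<Rightarrow> nat"
  assumes c0: "c 0 = 0" and cinc: "\<And>U. c U < c (Suc U)" and cC: "\<And>U. c (Suc U) \<le> c U + C"
    and xB: "\<And>j. \<bar>x j\<bar> \<le> B"
    and hs: "\<And>U. (\<Sum>u=1..U. w u) = (\<Sum>j=1..c U. x j)"
  shows "mp_ok x \<longleftrightarrow> mp_ok w"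
proof -
  have C1: "C \<ge> 1" using cinc[of 0] cC[of 0] c0 by simp
  have B0: "B \<ge> 0" using xB[of 0] by simp
  have cle: "c U \<le> C * U" for U
  proof (induction U)
    case 0 then show ?case using c0 by simp
  next
    case (Suc U) then show ?case using cC[of U] by simp
  qed
  have cge: "U \<le> c U" for U
  proof (induction U)
    case 0 then show ?case by simp
  next
    case (Suc U) then show ?case using cinc[of U] by simp
  qed
  have cmono: "U \<le> V \<Longrightarrow> c U \<le> c V" for U V
    by (metis cinc less_imp_le_nat lift_Suc_mono_le)
  have split: "\<exists>U. c U \<le> N \<and> N < c (Suc U)" for N
  proof (induction N)
    case 0 then show ?case using c0 cinc[of 0] by auto
  next
    case (Suc N)
    then obtain U where U: "c U \<le> N" "N < c (Suc U)" by blast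
    show ?case
    proof (cases "Suc N < c (Suc U)")
      case True then show ?thesis using U by (intro exI[of _ U]) auto
    next
      case False
      then have "Suc N = c (Suc U)" using U by simp
      then show ?thesis using cinc[of "Suc U"] by (intro exI[of _ "Suc U"]) auto
    qed
  qed
  show ?thesis
  proof
    assume "mp_ok x"
    then have hx: "\<forall>e>0. \<exists>N0. \<forall>N\<ge>N0. - e * real N \<le> (\<Sum>j=1..N. x j)" by (simp add: mp_ok_iff)
    show "mp_ok w" unfolding mp_ok_iff
    proof (intro allI impI)
      fix e :: real assume e: "e > 0"
      have "e / real C > 0" using e C1 by simp
      then obtain N0 where N0: "\<And>N. N \<ge> N0 \<Longrightarrow> - (e / real C) * real N \<le> (\<Sum>j=1..N. x j)"
        using hx by meson
      show "\<exists>N0. \<forall>N\<ge>N0. - e * real N \<le> (\<Sum>j=1..N. w j)"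
      proof (intro exI allI impI)
        fix U assume U: "U \<ge> N0"
        then have "c U \<ge> N0" using cge[of U] by simp
        then have a: "- (e / real C) * real (c U) \<le> (\<Sum>j=1..c U. x j)" using N0 by simp
        have "real (c U) \<le> real C * real U" using cle[of U] by (metis of_nat_le_iff of_nat_mult)
        then have "(e / real C) * real (c U) \<le> (e / real C) * (real C * real U)"
          using e C1 by (intro mult_left_mono) auto
        also have "\<dots> = e * real U" using C1 by simp
        finally show "- e * real U \<le> (\<Sum>j=1..U. w j)" using a hs[of U] by simp
      qed
    qed
  next
    assume "mp_ok w"
    then have hw: "\<forall>e>0. \<exists>N0. \<forall>N\<ge>N0. - e * real N \<le> (\<Sum>j=1..N. w j)" by (simp add: mp_ok_iff)
    show "mp_ok x" unfolding mp_ok_iff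
    proof (intro allI impI)
      fix e :: real assume e: "e > 0"
      obtain U0 where U0: "\<And>U. U \<ge> U0 \<Longrightarrow> - (e/2) * real U \<le> (\<Sum>j=1..U. w j)"
        using hw e by (meson half_gt_zero)
      define N1 where "N1 = c U0 + nat \<lceil>2 * real C * B / e\<rceil>"
      show "\<exists>N0. \<forall>N\<ge>N0. - e * real N \<le> (\<Sum>j=1..N. x j)"
      proof (intro exI allI impI)
        fix N assume N: "N \<ge> N1"
        obtain U where U: "c U \<le> N" "N < c (Suc U)" using split by blast
        have UU0: "U \<ge> U0"
        proof (rule ccontr)
          assume "\<not> U \<ge> U0"
          then have "Suc U \<le> U0" by simp
          then have "c (Suc U) \<le> c U0" by (rule cmono)
          then show False using U N N1_def by simp
        qed
        have UN: "real U \<le> real N" using cge[of U] U by simp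
        have a: "- (e/2) * real U \<le> (\<Sum>j=1..c U. x j)" using U0[OF UU0] hs[of U] by simp
        have "(\<Sum>j=Suc (c U)..N. x j) \<ge> (\<Sum>j=Suc (c U)..N. - B)"
          using xB by (intro sum_mono) (metis abs_le_iff minus_le_iff)
        moreover have "(\<Sum>j=Suc (c U)..N. - B) = - real (N - c U) * B" by simp
        moreover have "real (N - c U) \<le> real C" using U cC[of U] by simp
        ultimately have b: "(\<Sum>j=Suc (c U)..N. x j) \<ge> - real C * B"
          using B0 by (smt (verit, best) mult_right_mono)
        have sp: "(\<Sum>j=1..N. x j) = (\<Sum>j=1..c U. x j) + (\<Sum>j=Suc (c U)..N. x j)"
          using U by (intro sum_split_nat) simp
        have "real N \<ge> 2 * real C * B / e" using N N1_def by linarith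
        then have c: "e * real N \<ge> 2 * real C * B" using e by (simp add: field_simps)
        have "(e/2) * real U \<le> (e/2) * real N" using UN e by simp
        then show "- e * real N \<le> (\<Sum>j=1..N. x j)" using a b c sp by linarith
      qed
    qed
  qed
qed


primrec itr :: "'q roMPG \<Rightarrow> 'q node \<Rightarrow> nat \<Rightarrow> 'q node option" where
  "itr A x 0 = Some x"
| "itr A x (Suc j) = Option.bind (itr A x j) (succ A)"

lemma play_itr: "play A i j = itr A (Entr i) j"
  by (induction j) auto

lemma itr_add: "itr A x (a + b) = Option.bind (itr A x a) (\<lambda>y. itr A y b)"
proof (induction b)
  case 0 then show ?case by (cases "itr A x a") auto
next
  case (Suc b) then show ?case by (cases "itr A x a") auto
qed

lemma itr_None_mono: "itr A x a = None \<Longrightarrow> a \<le> b \<Longrightarrow> itr A x b = None"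
proof (induction b)
  case 0 then show ?case by (metis le_0_eq)
next
  case (Suc b)
  show ?case
  proof (cases "a = Suc b")
    case True then show ?thesis using Suc.prems(1) by metis
  next
    case False
    then have "a \<le> b" using Suc.prems(2) by simp
    then have "itr A x b = None" using Suc.IH Suc.prems(1) by blast
    then show ?thesis by simp
  qed
qed

lemma itr_Some_le: "itr A x b \<noteq> None \<Longrightarrow> a \<le> b \<Longrightarrow> itr A x a \<noteq> None"
  using itr_None_mono by metis

lemma itr_periodic:
  assumes "itr A x a = Some y" "itr A x b = Some y" "a < b"
  shows "itr A x j \<noteq> None"
proof (induction j rule: less_induct)
  case (less j)
  show ?case
  proof (cases "j \<le> b")
    case True then show ?thesis using assms(2) itr_Some_le[of A x b j] by simp
  next
    case False
    then obtain d where d: "j = b + d" by (metis le_add_diff_inverse nat_le_linear)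
    have "itr A x j = itr A y d" using d assms(2) by (simp add: itr_add)
    also have "\<dots> = itr A x (a + d)" using assms(1) by (simp add: itr_add)
    finally have e: "itr A x j = itr A x (a + d)" .
    have "a + d < j" using d assms(3) by linarith
    then have "itr A x (a + d) \<noteq> None" by (rule less)
    then show ?thesis using e by metis
  qed
qed

lemma play_None_mono: "play A i j = None \<Longrightarrow> j \<le> k \<Longrightarrow> play A i k = None"
  unfolding play_itr using itr_None_mono by metis

lemma PDa:
  assumes "play A i M = Some (Exit k)" "play A i (Suc M) = None"
  shows "play_den A i = (if M = 1 then Plain k else if M \<ge> 2 then Weighted (\<Sum>j=1..M-1. posw A (the (play A i j))) k else undefined)"
proof -
  have L: "(LEAST j. play A i (Suc j) = None) = M"
  proof (rule Least_equality)
    show "play A i (Suc M) = None" by fact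
    fix y assume "play A i (Suc y) = None"
    then show "M \<le> y" using assms(1) play_None_mono[of A i "Suc y" M] by (metis not_less_eq_eq option.distinct(1))
  qed
  have ex: "\<exists>j. play A i j = None" using assms(2) by blast
  show ?thesis unfolding play_den_def if_P[OF ex] Let_def L assms(1) option.sel by simp
qed

lemma PDb:
  assumes "play A i M = Some (Pos q)" "play A i (Suc M) = None"
  shows "play_den A i = (if role A q = PAll then EStar else AStar)"
proof -
  have L: "(LEAST j. play A i (Suc j) = None) = M"
  proof (rule Least_equality)
    show "play A i (Suc M) = None" by fact
    fix y assume "play A i (Suc y) = None"
    then show "M \<le> y" using assms(1) play_None_mono[of A i "Suc y" M] by (metis not_less_eq_eq option.distinct(1))
  qed
  have ex: "\<exists>j. play A i j = None" using assms(2) by blast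
  show ?thesis unfolding play_den_def if_P[OF ex] Let_def L assms(1) option.sel by simp
qed

lemma PDc:
  assumes "\<And>j. play A i j \<noteq> None"
  shows "play_den A i = (if mp_ok (\<lambda>j. posw A (the (play A i j))) then EStar else AStar)"
proof -
  have ex: "\<not> (\<exists>j. play A i j = None)" using assms by blast
  show ?thesis unfolding play_den_def if_not_P[OF ex] ..
qed

primrec tdp' :: "nat \<Rightarrow> (nat \<Rightarrow> nat T) \<Rightarrow> nat \<Rightarrow> nat \<Rightarrow> nat T option" where
  "tdp' l f e 0 = Some (Plain e)"
| "tdp' l f e (Suc j) = (if j = 0 then Some (f e) else Option.bind (tdp' l f e j) (tstep l f))"

lemma tdp_tdp': "tdp l f i j = tdp' l f (l + i) j"
  by (induction j) auto

lemma tdp_None_mono: "tdp l f i j = None \<Longrightarrow> j \<le> k \<Longrightarrow> tdp l f i k = None"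
proof (induction k)
  case 0 then show ?case by simp
next
  case (Suc k)
  show ?case
  proof (cases "j = Suc k")
    case True then show ?thesis using Suc.prems by simp
  next
    case False
    then have "tdp l f i k = None" using Suc by simp
    moreover then have "k \<noteq> 0" by (metis option.distinct(1) tdp.simps(1))
    ultimately show ?thesis by simp
  qed
qed

lemma TDa:
  assumes "tdp l f i K = Some y" "tdp l f i (Suc K) = None"
  shows "tdp_den l (tdp l f i) =
    (let S = (\<Sum>j=1..K. twt (the (tdp l f i j))) in
        case y of
          EStar \<Rightarrow> EStar
        | AStar \<Rightarrow> AStar
        | Plain x \<Rightarrow> (if x > l \<and> (\<forall>j\<in>{1..<K}. in_l l (the (tdp l f i j))) then Plain (x - l)
                     else if x > l \<and> (\<exists>j\<in>{1..<K}. weighted_l l (the (tdp l f i j))) then Weighted S (x - l)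
                     else undefined)
        | Weighted r x \<Rightarrow> (if x > l then Weighted S (x - l) else undefined))"
proof -
  have L: "(LEAST j. tdp l f i (Suc j) = None) = K"
  proof (rule Least_equality)
    show "tdp l f i (Suc K) = None" by fact
    fix y assume "tdp l f i (Suc y) = None"
    then show "K \<le> y" using assms(1) tdp_None_mono[of l f i "Suc y" K] by (metis not_less_eq_eq option.distinct(1))
  qed
  have ex: "\<exists>j. tdp l f i j = None" using assms(2) by blast
  show ?thesis unfolding tdp_den_def if_P[OF ex] L Let_def assms(1) option.sel ..
qed

lemma TDc:
  assumes "\<And>j. tdp l f i j \<noteq> None"
  shows "tdp_den l (tdp l f i) =
       (let J = {j. j \<ge> 1 \<and> weighted_l l (the (tdp l f i j))};
            w' = (\<lambda>t. twt (the (tdp l f i (Infinite_Set.enumerate J (t - 1))))) in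
        if infinite J \<and> mp_ok w' then EStar else AStar)"
proof -
  have ex: "\<not> (\<exists>j. tdp l f i j = None)" using assms by blast
  show ?thesis unfolding tdp_den_def if_not_P[OF ex] ..
qed


lemma succ_None_iff: "succ A x = None \<longleftrightarrow> (\<nexists>y. (x, y) \<in> edges A)"
  unfolding succ_def by auto

lemma succ_Some_iff:
  assumes det: "\<And>s t t'. (s, t) \<in> edges A \<Longrightarrow> (s, t') \<in> edges A \<Longrightarrow> t = t'"
  shows "succ A x = Some y \<longleftrightarrow> (x, y) \<in> edges A"
proof
  assume h: "succ A x = Some y"
  then have ex: "\<exists>t. (x, t) \<in> edges A" unfolding succ_def by (metis option.distinct(1))
  then have "y = (THE t. (x, t) \<in> edges A)" using h unfolding succ_def by simp
  moreover have "(x, THE t. (x, t) \<in> edges A) \<in> edges A"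
    using ex det by (metis theI)
  ultimately show "(x, y) \<in> edges A" by simp
next
  assume h: "(x, y) \<in> edges A"
  then have "(THE t. (x, t) \<in> edges A) = y" using det by blast
  then show "succ A x = Some y" unfolding succ_def using h by auto
qed

lemma tgts_cases: "y \<in> tgts N Q \<Longrightarrow> (\<exists>q\<in>Q. y = Pos q) \<or> (\<exists>k\<in>{1..N}. y = Exit k)"
  unfolding tgts_def by auto

lemma srcs_simps[simp]:
  "Entr e \<in> srcs N Q \<longleftrightarrow> e \<in> {1..N}" "Exit k \<notin> srcs N Q" "Pos q \<in> srcs N Q \<longleftrightarrow> q \<in> Q"
  unfolding srcs_def by auto

lemma tgts_simps[simp]:
  "Entr e \<notin> tgts N Q" "Exit k \<in> tgts N Q \<longleftrightarrow> k \<in> {1..N}" "Pos q \<in> tgts N Q \<longleftrightarrow> q \<in> Q"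
  unfolding tgts_def by auto

lemma hat_inj: "hat l a = hat l b \<Longrightarrow> a = b"
  by (cases a; cases b) auto

fun tidx :: "nat T \<Rightarrow> nat" where
  "tidx (Plain k) = k"
| "tidx (Weighted r k) = k"
| "tidx _ = 0"

locale tsetup =
  fixes E :: "'q roMPG" and l m n i :: nat
  assumes roPG: "is_roPG E" and entE: "ent E = l + m" and exE: "ex E = l + n" and iin: "i \<in> {1..m}"
begin

abbreviation "Q \<equiv> pos E"
abbreviation "TT \<equiv> trace l m n E"
abbreviation "p \<equiv> play TT i"

lemma finQ: "finite Q"
  using roPG unfolding is_roPG_def is_roMPG_def by auto

lemma edgesE: "(x, y) \<in> edges E \<Longrightarrow> x \<in> srcs (l + m) Q \<and> y \<in> tgts (l + n) Q"
  using roPG entE exE unfolding is_roPG_def is_roMPG_def by auto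

lemma detE: "(x, y) \<in> edges E \<Longrightarrow> (x, y') \<in> edges E \<Longrightarrow> y = y'"
  using roPG unfolding is_roPG_def by blast

lemma entr_succ: "e \<in> {1..l+m} \<Longrightarrow> \<exists>t. (Entr e, t) \<in> edges E"
  using roPG entE unfolding is_roPG_def is_roMPG_def by auto

lemma exit_uniq: "(s, Exit k) \<in> edges E \<Longrightarrow> (s', Exit k) \<in> edges E \<Longrightarrow> s = s'"
proof -
  assume a: "(s, Exit k) \<in> edges E" "(s', Exit k) \<in> edges E"
  then have "k \<in> {1..ex E}" using edgesE[OF a(1)] exE by simp
  then show "s = s'" using a roPG unfolding is_roPG_def is_roMPG_def by blast
qed

lemma no_exit_edge: "(Exit k, y) \<notin> edges E"
  using edgesE[of "Exit k" y] by auto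

lemma succE_iff: "succ E x = Some y \<longleftrightarrow> (x, y) \<in> edges E"
  by (rule succ_Some_iff) (rule detE)

lemma edges_T: "edges TT = {(s, t). s \<in> srcs m Q \<and> t \<in> tgts n Q \<and>
                (\<exists>is. set is \<subseteq> {1..l} \<and> chain (edges E) (hat l s) is (hat l t))}"
  unfolding trace_def by simp

lemma posw_T: "posw TT y = posw E y"
  by (cases y) (auto simp: trace_def)

lemma role_T: "role TT = role E"
  by (simp add: trace_def)

definition Rset :: "'q node \<Rightarrow> 'q node set" where
  "Rset x = {y. \<exists>is. set is \<subseteq> {1..l} \<and> chain (edges E) x is y \<and> y \<in> hat l ` tgts n Q}"

lemma hat_tgts: "y \<in> hat l ` tgts n Q \<longleftrightarrow> (\<exists>q\<in>Q. y = Pos q) \<or> (\<exists>k. l < k \<and> k \<le> l + n \<and> y = Exit k)"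
proof
  assume "y \<in> hat l ` tgts n Q"
  then obtain t where t: "t \<in> tgts n Q" "y = hat l t" by blast
  then show "(\<exists>q\<in>Q. y = Pos q) \<or> (\<exists>k. l < k \<and> k \<le> l + n \<and> y = Exit k)"
    using tgts_cases[OF t(1)] by auto
next
  assume "(\<exists>q\<in>Q. y = Pos q) \<or> (\<exists>k. l < k \<and> k \<le> l + n \<and> y = Exit k)"
  then show "y \<in> hat l ` tgts n Q"
  proof
    assume "\<exists>q\<in>Q. y = Pos q"
    then obtain q where "q \<in> Q" "y = Pos q" by blast
    then show ?thesis by (intro image_eqI[of _ _ "Pos q"]) auto
  next
    assume "\<exists>k. l < k \<and> k \<le> l + n \<and> y = Exit k"
    then obtain k where k: "l < k" "k \<le> l + n" "y = Exit k" by blast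
    then show ?thesis by (intro image_eqI[of _ _ "Exit (k - l)"]) auto
  qed
qed

lemma edgesT_iff: "(s, t) \<in> edges TT \<longleftrightarrow> s \<in> srcs m Q \<and> t \<in> tgts n Q \<and> hat l t \<in> Rset (hat l s)"
  unfolding edges_T Rset_def by auto

lemma chain_det:
  assumes "chain (edges E) x is y" "chain (edges E) x is' y'" "set is \<subseteq> {1..l}" "set is' \<subseteq> {1..l}"
    "y \<in> hat l ` tgts n Q" "y' \<in> hat l ` tgts n Q"
  shows "y = y'"
  using assms
proof (induction "is" arbitrary: x is')
  case Nil
  then show ?case
  proof (cases is')
    case Nil then show ?thesis using Nil.prems detE by auto
  next
    case (Cons j js)
    then have "(x, Exit j) \<in> edges E" "j \<le> l" using Nil.prems by auto
    then have "y = Exit j" using Nil.prems detE by auto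
    then show ?thesis using Nil.prems(5) \<open>j \<le> l\<close> unfolding hat_tgts by auto
  qed
next
  case (Cons j js)
  show ?case
  proof (cases is')
    case Nil
    have "(x, Exit j) \<in> edges E" "j \<le> l" using Cons.prems by auto
    then have "y' = Exit j" using Cons.prems Nil detE by auto
    then show ?thesis using Cons.prems(6) \<open>j \<le> l\<close> unfolding hat_tgts by auto
  next
    case (Cons j' js')
    have "(x, Exit j) \<in> edges E" "(x, Exit j') \<in> edges E" using Cons.prems \<open>is' = j' # js'\<close> by auto
    then have "j = j'" using detE by blast
    have c1: "chain (edges E) (Entr j) js y" using Cons.prems(1) by simp
    have c2: "chain (edges E) (Entr j) js' y'" using Cons.prems(2) \<open>is' = j' # js'\<close> \<open>j = j'\<close> by simp
    have s1: "set js \<subseteq> {1..l}" using Cons.prems(3) by simp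
    have s2: "set js' \<subseteq> {1..l}" using Cons.prems(4) \<open>is' = j' # js'\<close> by simp
    show ?thesis by (rule Cons.IH[OF c1 c2 s1 s2 Cons.prems(5,6)])
  qed
qed

lemma Rset_uniq: "y \<in> Rset x \<Longrightarrow> y' \<in> Rset x \<Longrightarrow> y = y'"
  unfolding Rset_def using chain_det by blast

lemma detT: "(s, t) \<in> edges TT \<Longrightarrow> (s, t') \<in> edges TT \<Longrightarrow> t = t'"
  unfolding edgesT_iff using Rset_uniq hat_inj by metis

lemma succT_iff: "succ TT x = Some y \<longleftrightarrow> (x, y) \<in> edges TT"
  by (rule succ_Some_iff) (rule detT)

lemma R1: "(x, Pos q) \<in> edges E \<Longrightarrow> Rset x = {Pos q}"
proof -
  assume e: "(x, Pos q) \<in> edges E"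
  then have q: "q \<in> Q" using edgesE[OF e] by simp
  show "Rset x = {Pos q}"
  proof (intro equalityI subsetI)
    fix y assume "y \<in> Rset x"
    then obtain js where js: "set js \<subseteq> {1..l}" "chain (edges E) x js y" unfolding Rset_def by blast
    show "y \<in> {Pos q}"
    proof (cases js)
      case Nil then show ?thesis using js e detE by auto
    next
      case (Cons j js')
      then have "(x, Exit j) \<in> edges E" using js by auto
      then show ?thesis using e detE by blast
    qed
  next
    fix y assume "y \<in> {Pos q}"
    then show "y \<in> Rset x" unfolding Rset_def hat_tgts using e q
      by (auto intro!: exI[of _ "[]"])
  qed
qed

lemma R2: "(x, Exit k) \<in> edges E \<Longrightarrow> l < k \<Longrightarrow> Rset x = {Exit k}"
proof -
  assume e: "(x, Exit k) \<in> edges E" and k: "l < k"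
  then have k2: "k \<le> l + n" using edgesE[OF e] by simp
  show "Rset x = {Exit k}"
  proof (intro equalityI subsetI)
    fix y assume "y \<in> Rset x"
    then obtain js where js: "set js \<subseteq> {1..l}" "chain (edges E) x js y" unfolding Rset_def by blast
    show "y \<in> {Exit k}"
    proof (cases js)
      case Nil then show ?thesis using js e detE by auto
    next
      case (Cons j js')
      then have "(x, Exit j) \<in> edges E" "j \<le> l" using js by auto
      then show ?thesis using e detE k by fastforce
    qed
  next
    fix y :: "'q node" assume "y \<in> {Exit k}"
    then show "y \<in> Rset x" unfolding Rset_def hat_tgts using e k k2
      by (auto intro!: exI[of _ "[]"])
  qed
qed

lemma R3: "(x, Exit k) \<in> edges E \<Longrightarrow> k \<in> {1..l} \<Longrightarrow> Rset x = Rset (Entr k)"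
proof -
  assume e: "(x, Exit k) \<in> edges E" and k: "k \<in> {1..l}"
  show "Rset x = Rset (Entr k)"
  proof (intro equalityI subsetI)
    fix y assume y: "y \<in> Rset x"
    then obtain js where js: "set js \<subseteq> {1..l}" "chain (edges E) x js y" "y \<in> hat l ` tgts n Q"
      unfolding Rset_def by blast
    show "y \<in> Rset (Entr k)"
    proof (cases js)
      case Nil
      then have "y = Exit k" using js e detE by auto
      then show ?thesis using js(3) k unfolding hat_tgts by auto
    next
      case (Cons j js')
      then have "(x, Exit j) \<in> edges E" "chain (edges E) (Entr j) js' y" using js by auto
      then have "j = k" "chain (edges E) (Entr k) js' y" using e detE by auto
      then show ?thesis unfolding Rset_def using js Cons by auto
    qed
  next
    fix y assume "y \<in> Rset (Entr k)"
    then obtain js where js: "set js \<subseteq> {1..l}" "chain (edges E) (Entr k) js y" "y \<in> hat l ` tgts n Q"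
      unfolding Rset_def by blast
    then have "chain (edges E) x (k # js) y" "set (k # js) \<subseteq> {1..l}" using e k by auto
    then show "y \<in> Rset x" unfolding Rset_def using js(3) by blast
  qed
qed

lemma R4: "\<nexists>y. (x, y) \<in> edges E \<Longrightarrow> Rset x = {}"
proof -
  assume h: "\<nexists>y. (x, y) \<in> edges E"
  have "chain (edges E) x js y \<Longrightarrow> False" for js y using h by (cases js) auto
  then show ?thesis unfolding Rset_def by blast
qed

definition Inv :: "nat \<Rightarrow> 'q node \<Rightarrow> bool" where
  "Inv j x \<longleftrightarrow> (\<exists>s. p j = Some s \<and> s \<in> srcs m Q \<and> Rset (hat l s) = Rset x)"

lemma S1:
  assumes "Inv j x" "(x, Pos q) \<in> edges E"
  shows "p (Suc j) = Some (Pos q) \<and> Inv (Suc j) (Pos q)"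
proof -
  obtain s where s: "p j = Some s" "s \<in> srcs m Q" "Rset (hat l s) = Rset x" using assms(1) unfolding Inv_def by blast
  have q: "q \<in> Q" using edgesE[OF assms(2)] by simp
  have "Rset (hat l s) = {Pos q}" using s(3) R1[OF assms(2)] by simp
  then have "(s, Pos q) \<in> edges TT" unfolding edgesT_iff using s(2) q by simp
  then have "succ TT s = Some (Pos q)" using succT_iff by simp
  then have "p (Suc j) = Some (Pos q)" using s(1) by simp
  then show ?thesis unfolding Inv_def using q by auto
qed

lemma S2:
  assumes "Inv j x" "(x, Exit k) \<in> edges E" "k \<in> {1..l}"
  shows "Inv j (Entr k)"
proof -
  have "Rset x = Rset (Entr k)" using R3[OF assms(2,3)] .
  then show ?thesis using assms(1) unfolding Inv_def by simp
qed

lemma S3: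
  assumes "Inv j x" "(x, Exit k) \<in> edges E" "l < k"
  shows "p (Suc j) = Some (Exit (k - l)) \<and> p (Suc (Suc j)) = None"
proof -
  obtain s where s: "p j = Some s" "s \<in> srcs m Q" "Rset (hat l s) = Rset x" using assms(1) unfolding Inv_def by blast
  have k: "k \<le> l + n" using edgesE[OF assms(2)] by simp
  have "Rset (hat l s) = {Exit k}" using s(3) R2[OF assms(2,3)] by simp
  moreover have "hat l (Exit (k - l)) = Exit k" using assms(3) by simp
  ultimately have h1: "hat l (Exit (k - l)) \<in> Rset (hat l s)" by simp
  have "1 \<le> k - l" "k - l \<le> n" using k assms(3) by linarith+
  then have h2: "Exit (k - l) \<in> tgts n Q" by simp
  have "(s, Exit (k - l)) \<in> edges TT" unfolding edgesT_iff using s(2) h1 h2 by (intro conjI)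
  then have "succ TT s = Some (Exit (k - l))" using succT_iff by simp
  then have 1: "p (Suc j) = Some (Exit (k - l))" using s(1) by simp
  have "succ TT (Exit (k - l)) = None" unfolding succ_None_iff edgesT_iff by simp
  then show ?thesis using 1 by simp
qed

lemma S4:
  assumes "Inv j x" "\<nexists>y. (x, y) \<in> edges E"
  shows "p (Suc j) = None"
proof -
  obtain s where s: "p j = Some s" "s \<in> srcs m Q" "Rset (hat l s) = Rset x" using assms(1) unfolding Inv_def by blast
  have "Rset (hat l s) = {}" using s(3) R4[OF assms(2)] by simp
  then have "succ TT s = None" unfolding succ_None_iff edgesT_iff by simp
  then show ?thesis using s(1) by simp
qed

lemma Multi:
  assumes "Inv j x" "\<And>r. r \<in> {1..R} \<Longrightarrow> \<exists>q. itr E x r = Some (Pos q)" "r \<le> R"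
  shows "Inv (j + r) (the (itr E x r)) \<and> (1 \<le> r \<longrightarrow> p (j + r) = itr E x r)"
  using assms(3)
proof (induction r)
  case 0 then show ?case using assms(1) by simp
next
  case (Suc r)
  have r1: "Suc r \<in> {1..R}" using Suc.prems by simp
  obtain q where q: "itr E x (Suc r) = Some (Pos q)" using assms(2)[OF r1] by blast
  then have "Option.bind (itr E x r) (succ E) = Some (Pos q)" unfolding itr.simps .
  then obtain z where z: "itr E x r = Some z" "succ E z = Some (Pos q)"
    by (metis bind_eq_Some_conv)
  have "r \<le> R" using Suc.prems by simp
  then have "Inv (j + r) (the (itr E x r))" using Suc.IH by simp
  then have iz: "Inv (j + r) z" using z(1) by simp
  have "(z, Pos q) \<in> edges E" using z(2) succE_iff by simp
  then have "p (Suc (j + r)) = Some (Pos q) \<and> Inv (Suc (j + r)) (Pos q)"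
    using S1[OF iz] by blast
  then have "p (j + Suc r) = Some (Pos q)" "Inv (j + Suc r) (Pos q)" by simp_all
  then show ?case unfolding q by simp
qed

end

definition cont :: "nat \<Rightarrow> nat T \<Rightarrow> bool" where
  "cont l y \<longleftrightarrow> in_l l y \<or> weighted_l l y"

lemma tstep_cont: "cont l y \<Longrightarrow> tstep l f y = Some (f (tidx y))"
  by (cases y) (auto simp: cont_def in_l_def weighted_l_def)

lemma tstep_not_cont: "\<not> cont l y \<Longrightarrow> tstep l f y = None"
  by (cases y) (auto simp: cont_def in_l_def weighted_l_def)

lemma cont_tidx: "cont l y \<Longrightarrow> tidx y \<in> {1..l}"
  by (cases y) (auto simp: cont_def in_l_def weighted_l_def)

lemma not_cont_star[simp]: "\<not> cont l EStar" "\<not> cont l AStar"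
  by (auto simp: cont_def in_l_def weighted_l_def)

lemma cont_Plain[simp]: "cont l (Plain k) \<longleftrightarrow> k \<in> {1..l}"
  by (auto simp: cont_def in_l_def weighted_l_def)

lemma cont_Weighted[simp]: "cont l (Weighted r k) \<longleftrightarrow> k \<in> {1..l}"
  by (auto simp: cont_def in_l_def weighted_l_def)

context tsetup
begin

lemma itr_tgts: "itr E x (Suc r) = Some y \<Longrightarrow> y \<in> tgts (l + n) Q"
proof -
  assume "itr E x (Suc r) = Some y"
  then have "Option.bind (itr E x r) (succ E) = Some y" unfolding itr.simps .
  then obtain z where "itr E x r = Some z" "succ E z = Some y" by (metis bind_eq_Some_conv)
  then have "(z, y) \<in> edges E" using succE_iff by simp
  then show ?thesis using edgesE by blast
qed

lemma itr_pred: "itr E x (Suc r) = Some y \<Longrightarrow> \<exists>z. itr E x r = Some z \<and> (z, y) \<in> edges E"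
proof -
  assume "itr E x (Suc r) = Some y"
  then have "Option.bind (itr E x r) (succ E) = Some y" unfolding itr.simps .
  then obtain z where "itr E x r = Some z" "succ E z = Some y" by (metis bind_eq_Some_conv)
  then show ?thesis using succE_iff by blast
qed

lemma itr_exit_stop: "itr E x r = Some (Exit k) \<Longrightarrow> itr E x (Suc r) = None"
proof -
  assume a: "itr E x r = Some (Exit k)"
  have "succ E (Exit k) = None" unfolding succ_None_iff using no_exit_edge by blast
  then show ?thesis using a by simp
qed

lemma itr_nodes:
  assumes "1 \<le> r" "itr E x r = Some y"
  shows "(\<exists>q\<in>Q. y = Pos q) \<or> (\<exists>k\<in>{1..l+n}. y = Exit k)"
proof -
  obtain r' where r': "r = Suc r'" using assms(1) by (cases r) auto
  show ?thesis using itr_tgts[of x r' y] assms(2) r' tgts_cases by blast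
qed

lemma SEG:
  assumes e: "e \<in> {1..l+m}"
  shows "(\<exists>M k. 1 \<le> M \<and> itr E (Entr e) M = Some (Exit k) \<and> itr E (Entr e) (Suc M) = None
            \<and> (\<forall>r\<in>{1..<M}. \<exists>q. itr E (Entr e) r = Some (Pos q)) \<and> k \<in> {1..l+n})
       \<or> (\<exists>M q. 1 \<le> M \<and> itr E (Entr e) M = Some (Pos q) \<and> itr E (Entr e) (Suc M) = None
            \<and> (\<forall>r\<in>{1..M}. \<exists>q. itr E (Entr e) r = Some (Pos q)))
       \<or> (\<forall>r. 1 \<le> r \<longrightarrow> (\<exists>q. itr E (Entr e) r = Some (Pos q)))"
proof -
  let ?x = "Entr e"
  obtain t where t: "(?x, t) \<in> edges E" using entr_succ[OF e] by blast
  then have s1: "itr E ?x 1 = Some t" using succE_iff by simp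
  have notexit: "\<exists>q. itr E ?x r = Some (Pos q)" if r1: "1 \<le> r" and r2: "itr E ?x (Suc r) \<noteq> None" for r
  proof -
    obtain y where y: "itr E ?x r = Some y" using r2 itr_None_mono[of E ?x r "Suc r"]
      by (cases "itr E ?x r") auto
    have "\<not> (\<exists>k. y = Exit k)" using itr_exit_stop[of ?x r] y r2 by auto
    then show ?thesis using itr_nodes[OF r1 y] y by blast
  qed
  show ?thesis
  proof (cases "\<exists>r. itr E ?x (Suc r) = None")
    case True
    define M where "M = (LEAST r. itr E ?x (Suc r) = None)"
    have hM: "itr E ?x (Suc M) = None" unfolding M_def using True by (rule LeastI_ex)
    have hmin: "r < M \<Longrightarrow> itr E ?x (Suc r) \<noteq> None" for r
      unfolding M_def by (rule not_less_Least)
    have M1: "1 \<le> M"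
    proof (rule ccontr)
      assume "\<not> 1 \<le> M"
      then have "M = 0" by simp
      then show False using hM s1 by simp
    qed
    have inner: "\<forall>r\<in>{1..<M}. \<exists>q. itr E ?x r = Some (Pos q)"
    proof
      fix r assume r: "r \<in> {1..<M}"
      then have "itr E ?x (Suc r) \<noteq> None" using hmin by simp
      then show "\<exists>q. itr E ?x r = Some (Pos q)" using notexit r by simp
    qed
    obtain M' where M': "M = Suc M'" using M1 by (cases M) auto
    have "itr E ?x M \<noteq> None" using hmin[of M'] M' by simp
    then obtain y where y: "itr E ?x M = Some y" by blast
    from itr_nodes[OF M1 y] show ?thesis
    proof
      assume "\<exists>q\<in>Q. y = Pos q"
      then obtain q where "y = Pos q" by blast
      then have "itr E ?x M = Some (Pos q)" using y by simp
      moreover have "\<forall>r\<in>{1..M}. \<exists>q. itr E ?x r = Some (Pos q)"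
        using inner calculation by (metis atLeastAtMost_iff atLeastLessThan_iff le_neq_implies_less)
      ultimately show ?thesis using M1 hM by blast
    next
      assume "\<exists>k\<in>{1..l+n}. y = Exit k"
      then obtain k where "k \<in> {1..l+n}" "y = Exit k" by blast
      then show ?thesis using M1 hM inner y by blast
    qed
  next
    case False
    then have "\<forall>r. 1 \<le> r \<longrightarrow> (\<exists>q. itr E ?x r = Some (Pos q))" using notexit by blast
    then show ?thesis by blast
  qed
qed

lemma LEAST_seg:
  assumes "itr E x M = Some y" "itr E x (Suc M) = None"
  shows "(LEAST r. itr E x (Suc r) = None) = M"
proof (rule Least_equality)
  show "itr E x (Suc M) = None" by fact
  fix r assume "itr E x (Suc r) = None"
  then show "M \<le> r" using assms(1) itr_None_mono[of E x "Suc r" M] by (metis not_less_eq_eq option.distinct(1))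
qed

lemma seg_bound:
  assumes "itr E x (Suc M) = None" "\<forall>r\<in>{1..<M}. \<exists>q. itr E x r = Some (Pos q)"
  shows "M - 1 \<le> card Q"
proof -
  let ?g = "\<lambda>r. the (itr E x r)"
  have inj: "inj_on ?g {1..<M}"
  proof (rule inj_onI)
    fix a b assume ab: "a \<in> {1..<M}" "b \<in> {1..<M}" "?g a = ?g b"
    show "a = b"
    proof (rule ccontr)
      assume ne: "a \<noteq> b"
      obtain qa where qa: "itr E x a = Some (Pos qa)" using assms(2) ab(1) by blast
      obtain qb where qb: "itr E x b = Some (Pos qb)" using assms(2) ab(2) by blast
      have eq: "itr E x a = itr E x b" using qa qb ab(3) by simp
      show False
      proof (cases "a < b")
        case True
        then have "itr E x (Suc M) \<noteq> None" using itr_periodic[of E x a "Pos qa" b "Suc M"] qa qb eq by simp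
        then show False using assms(1) by simp
      next
        case False
        then have "b < a" using ne by simp
        then have "itr E x (Suc M) \<noteq> None" using itr_periodic[of E x b "Pos qb" a "Suc M"] qa qb eq by simp
        then show False using assms(1) by simp
      qed
    qed
  qed
  have sub: "?g ` {1..<M} \<subseteq> Pos ` Q"
  proof
    fix y assume "y \<in> ?g ` {1..<M}"
    then obtain r where r: "r \<in> {1..<M}" "y = ?g r" by blast
    obtain q where q: "itr E x r = Some (Pos q)" using assms(2) r(1) by blast
    have "1 \<le> r" using r(1) by simp
    then have "q \<in> Q" using itr_nodes[OF _ q] by auto
    then show "y \<in> Pos ` Q" using q r(2) by simp
  qed
  have "card {1..<M} \<le> card (Pos ` Q)"
    using card_inj_on_le[OF inj sub] finQ by simp
  also have "\<dots> \<le> card Q" by (rule card_image_le[OF finQ])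
  finally show ?thesis by simp
qed

lemma PD1:
  assumes "1 \<le> M" "itr E (Entr e) M = Some (Exit k)" "itr E (Entr e) (Suc M) = None"
  shows "play_den E e = (if M = 1 then Plain k else Weighted (\<Sum>j=1..M-1. posw E (the (itr E (Entr e) j))) k)"
  using PDa[of E e M k] assms unfolding play_itr by simp

lemma PD2:
  assumes "itr E (Entr e) M = Some (Pos q)" "itr E (Entr e) (Suc M) = None"
  shows "play_den E e = (if role E q = PAll then EStar else AStar)"
  using PDb[of E e M q] assms unfolding play_itr by simp

lemma PD3:
  assumes "\<And>r. itr E (Entr e) r \<noteq> None"
  shows "play_den E e = (if mp_ok (\<lambda>j. posw E (the (itr E (Entr e) j))) then EStar else AStar)"
  using PDc[of E e] assms unfolding play_itr by simp

end

context tsetup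
begin

declare tdp.simps(2)[simp del]

abbreviation "v \<equiv> tdp l (play_den E) i"
abbreviation "xs \<equiv> (\<lambda>j. posw TT (the (p j)))"

definition ee :: "nat \<Rightarrow> nat" where "ee t = tidx (the (v t))"

definition segpos :: "nat \<Rightarrow> nat" where
  "segpos e = (LEAST M. itr E (Entr e) (Suc M) = None) - 1"

primrec jj :: "nat \<Rightarrow> nat" where
  "jj 0 = 0"
| "jj (Suc t) = jj t + segpos (ee t)"

definition CONT :: "nat \<Rightarrow> bool" where
  "CONT t \<longleftrightarrow> (\<forall>u\<in>{1..t}. \<exists>y. v u = Some y \<and> cont l y)"

lemma CONT_Suc: "CONT (Suc t) \<longleftrightarrow> CONT t \<and> (\<exists>y. v (Suc t) = Some y \<and> cont l y)"
  unfolding CONT_def by (auto simp: atLeastAtMostSuc_conv)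

lemma CONT_0: "CONT 0"
  unfolding CONT_def by simp

lemma v_next: "CONT t \<Longrightarrow> v (Suc t) = Some (play_den E (ee t)) \<and> ee t \<in> {1..l+m}"
proof (cases t)
  case 0
  then show ?thesis using iin by (simp add: ee_def tdp.simps(2))
next
  case (Suc t')
  assume c: "CONT t"
  then obtain y where y: "v t = Some y" "cont l y" unfolding CONT_def using Suc by force
  have "v (Suc t) = tstep l (play_den E) y" using y Suc by (simp add: tdp.simps(2))
  also have "\<dots> = Some (play_den E (tidx y))" using tstep_cont[OF y(2)] .
  finally show ?thesis using y cont_tidx[OF y(2)] by (simp add: ee_def)
qed

lemma STEP:
  assumes "CONT (Suc t)"
  shows "\<exists>M k. 1 \<le> M \<and> M - 1 \<le> card Q \<and> k \<in> {1..l} \<and> ee (Suc t) = k \<and> jj (Suc t) = jj t + (M - 1)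
     \<and> the (v (Suc t)) = (if M = 1 then Plain k else Weighted (\<Sum>j=1..M-1. posw E (the (itr E (Entr (ee t)) j))) k)
     \<and> itr E (Entr (ee t)) M = Some (Exit k) \<and> (\<forall>r\<in>{1..<M}. \<exists>q. itr E (Entr (ee t)) r = Some (Pos q))
     \<and> itr E (Entr (ee t)) (Suc M) = None"
proof -
  have ct: "CONT t" and cy: "\<exists>y. v (Suc t) = Some y \<and> cont l y" using assms CONT_Suc by auto
  have vn: "v (Suc t) = Some (play_den E (ee t))" and e: "ee t \<in> {1..l+m}" using v_next[OF ct] by auto
  have cc: "cont l (play_den E (ee t))" using cy vn by auto
  let ?x = "Entr (ee t)"
  from SEG[OF e] consider
    (c1) M k where "1 \<le> M" "itr E ?x M = Some (Exit k)" "itr E ?x (Suc M) = None"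
      "\<forall>r\<in>{1..<M}. \<exists>q. itr E ?x r = Some (Pos q)" "k \<in> {1..l+n}"
  | (c2) M q where "itr E ?x M = Some (Pos q)" "itr E ?x (Suc M) = None"
  | (c3) "\<forall>r. 1 \<le> r \<longrightarrow> (\<exists>q. itr E ?x r = Some (Pos q))"
    by blast
  then show ?thesis
  proof cases
    case (c1 M k)
    note M1 = c1(1) and hM = c1(2) and hS = c1(3) and inner = c1(4)
    have pd: "play_den E (ee t) = (if M = 1 then Plain k else Weighted (\<Sum>j=1..M-1. posw E (the (itr E ?x j))) k)"
      by (rule PD1[OF M1 hM hS])
    have kl: "k \<in> {1..l}" using cc unfolding pd by (cases "M = 1") auto
    have ee': "ee (Suc t) = k" unfolding ee_def[of "Suc t"] vn pd by simp
    have sp: "segpos (ee t) = M - 1" unfolding segpos_def using LEAST_seg[OF hM hS] by simp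
    have bd: "M - 1 \<le> card Q" by (rule seg_bound[OF hS inner])
    have vS: "the (v (Suc t)) = (if M = 1 then Plain k else Weighted (\<Sum>j=1..M-1. posw E (the (itr E ?x j))) k)"
      using vn pd by simp
    have jS: "jj (Suc t) = jj t + (M - 1)" using sp by simp
    show ?thesis using M1 bd kl ee' jS vS hM inner hS by blast
  next
    case (c2 M q)
    then have "play_den E (ee t) = (if role E q = PAll then EStar else AStar)" by (intro PD2)
    then have False using cc by (cases "role E q = PAll") auto
    then show ?thesis ..
  next
    case c3
    have "itr E ?x r \<noteq> None" for r
    proof (cases "r = 0")
      case True then show ?thesis by simp
    next
      case False then have "1 \<le> r" by simp
      then show ?thesis using c3 by force
    qed
    then have "play_den E (ee t) = (if mp_ok (\<lambda>j. posw E (the (itr E ?x j))) then EStar else AStar)" by (rule PD3)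
    then have False using cc by (cases "mp_ok (\<lambda>j. posw E (the (itr E ?x j)))") auto
    then show ?thesis ..
  qed
qed

lemma INV:
  "CONT t \<Longrightarrow> Inv (jj t) (Entr (ee t)) \<and> (\<Sum>u=1..t. twt (the (v u))) = (\<Sum>j=1..jj t. xs j)
      \<and> (jj t = 0 \<longleftrightarrow> (\<forall>u\<in>{1..t}. in_l l (the (v u))))"
proof (induction t)
  case 0
  have "Inv 0 (Entr (l + i))" unfolding Inv_def using iin by simp
  then show ?case by (simp add: ee_def)
next
  case (Suc t)
  have ct: "CONT t" using Suc.prems CONT_Suc by auto
  note IH = Suc.IH[OF ct]
  obtain M k where M1: "1 \<le> M" and kl: "k \<in> {1..l}" and ee': "ee (Suc t) = k"
    and jjS: "jj (Suc t) = jj t + (M - 1)"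
    and vS: "the (v (Suc t)) = (if M = 1 then Plain k else Weighted (\<Sum>j=1..M-1. posw E (the (itr E (Entr (ee t)) j))) k)"
    and hM: "itr E (Entr (ee t)) M = Some (Exit k)"
    and inner: "\<forall>r\<in>{1..<M}. \<exists>q. itr E (Entr (ee t)) r = Some (Pos q)"
    using STEP[OF Suc.prems] by blast
  let ?x = "Entr (ee t)"
  have inner': "\<And>r. r \<in> {1..M-1} \<Longrightarrow> \<exists>q. itr E ?x r = Some (Pos q)" using inner M1 by auto
  have mul: "Inv (jj t + r) (the (itr E ?x r)) \<and> (1 \<le> r \<longrightarrow> p (jj t + r) = itr E ?x r)" if "r \<le> M - 1" for r
    using Multi[OF conjunct1[OF IH] inner' that] .
  obtain M' where M': "M = Suc M'" using M1 by (cases M) auto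
  obtain z where z: "itr E ?x M' = Some z" "(z, Exit k) \<in> edges E" using itr_pred[of ?x M' "Exit k"] hM M' by auto
  have "Inv (jj t + M') z" using mul[of M'] M' z(1) by simp
  then have inv: "Inv (jj (Suc t)) (Entr (ee (Suc t)))" using S2[OF _ z(2) kl] jjS M' ee' by simp
  have tw: "twt (the (v (Suc t))) = (\<Sum>r=1..M-1. posw E (the (itr E ?x r)))"
    unfolding vS using M' by auto
  have "(\<Sum>j=1..jj (Suc t). xs j) = (\<Sum>j=1..jj t. xs j) + (\<Sum>r=1..M-1. xs (jj t + r))"
    unfolding jjS by (rule sum_shift_nat)
  also have "(\<Sum>r=1..M-1. xs (jj t + r)) = (\<Sum>r=1..M-1. posw E (the (itr E ?x r)))"
  proof (rule sum.cong)
    fix r assume r: "r \<in> {1..M-1}"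
    then have "p (jj t + r) = itr E ?x r" using mul[of r] by simp
    then show "xs (jj t + r) = posw E (the (itr E ?x r))" using posw_T by simp
  qed simp
  finally have sums: "(\<Sum>u=1..Suc t. twt (the (v u))) = (\<Sum>j=1..jj (Suc t). xs j)"
    using IH tw by simp
  have il: "in_l l (the (v (Suc t))) \<longleftrightarrow> M = 1" unfolding vS using kl by (simp add: in_l_def)
  have z1: "jj (Suc t) = 0 \<longleftrightarrow> jj t = 0 \<and> M = 1" using jjS M1 by linarith
  have z2: "(\<forall>u\<in>{1..Suc t}. in_l l (the (v u))) \<longleftrightarrow> (\<forall>u\<in>{1..t}. in_l l (the (v u))) \<and> in_l l (the (v (Suc t)))"
    by (simp add: atLeastAtMostSuc_conv conj_commute)
  have zero: "jj (Suc t) = 0 \<longleftrightarrow> (\<forall>u\<in>{1..Suc t}. in_l l (the (v u)))"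
    unfolding z1 z2 il using IH by blast
  show ?case using inv sums zero by blast
qed

end

definition tau :: "nat set \<Rightarrow> nat \<Rightarrow> nat" where
  "tau J U = (case U of 0 \<Rightarrow> 0 | Suc U' \<Rightarrow> enumerate J U')"

lemma tau_0[simp]: "tau J 0 = 0" and tau_Suc[simp]: "tau J (Suc U) = enumerate J U"
  by (simp_all add: tau_def)

lemma tau_lt:
  assumes "infinite J" "J \<subseteq> {1..}"
  shows "tau J U < tau J (Suc U)"
proof (cases U)
  case 0
  have "enumerate J 0 \<in> J" by (rule enumerate_in_set[OF assms(1)])
  then show ?thesis using 0 assms(2) by auto
next
  case (Suc U')
  then show ?thesis using enumerate_step[OF assms(1)] by simp
qed

lemma tau_gap:
  assumes "infinite J" "tau J U < t" "t < tau J (Suc U)"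
  shows "t \<notin> J"
proof
  assume tJ: "t \<in> J"
  show False
  proof (cases U)
    case 0
    obtain k where k: "enumerate J k = t" using enumerate_Ex[OF assms(1) tJ] by blast
    have "t < enumerate J 0" using assms(3) 0 by simp
    then show False using k enumerate_mono[OF _ assms(1), of 0 k] by (cases k) auto
  next
    case (Suc U')
    obtain k where k: "enumerate J k = t" using enumerate_Ex[OF assms(1) tJ] by blast
    have a: "enumerate J U' < enumerate J k" "enumerate J k < enumerate J (Suc U')"
      using assms(2,3) Suc k by simp_all
    show False
    proof (cases "k \<le> U'")
      case True
      then have "enumerate J k \<le> enumerate J U'"
        using enumerate_mono[OF _ assms(1), of k U'] by (cases "k = U'") auto
      then show False using a by simp
    next
      case False
      then have "Suc U' \<le> k" by simp
      then have "enumerate J (Suc U') \<le> enumerate J k"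
        using enumerate_mono[OF _ assms(1), of "Suc U'" k] by (cases "k = Suc U'") auto
      then show False using a by simp
    qed
  qed
qed

lemma enum_sum:
  fixes W :: "nat \<Rightarrow> real"
  assumes inf: "infinite J" and sub: "J \<subseteq> {1..}" and zero: "\<And>t. 1 \<le> t \<Longrightarrow> t \<notin> J \<Longrightarrow> W t = 0"
  shows "(\<Sum>u=1..U. W (enumerate J (u - 1))) = (\<Sum>t=1..tau J U. W t)"
proof (induction U)
  case 0 then show ?case by simp
next
  case (Suc U)
  let ?a = "tau J U" and ?b = "tau J (Suc U)"
  have ab: "?a < ?b" by (rule tau_lt[OF inf sub])
  have "(\<Sum>t=1..?b. W t) = (\<Sum>t=1..?a. W t) + (\<Sum>t=Suc ?a..?b. W t)"
    using ab by (intro sum_split_nat) simp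
  also have "(\<Sum>t=Suc ?a..?b. W t) = (\<Sum>t=Suc ?a..?b. if t = ?b then W t else 0)"
  proof (rule sum.cong)
    fix t assume t: "t \<in> {Suc ?a..?b}"
    show "W t = (if t = ?b then W t else 0)"
    proof (cases "t = ?b")
      case False
      then have "?a < t" "t < ?b" using t by auto
      then have "t \<notin> J" by (rule tau_gap[OF inf])
      moreover have "1 \<le> t" using t by simp
      ultimately show ?thesis using zero False by simp
    qed simp
  qed simp
  also have "\<dots> = W ?b" using ab by (simp add: sum.delta)
  finally have r: "(\<Sum>t=1..?b. W t) = (\<Sum>t=1..?a. W t) + W ?b" .
  have "(\<Sum>u=1..Suc U. W (enumerate J (u - 1))) = (\<Sum>u=1..U. W (enumerate J (u - 1))) + W (enumerate J U)"
    by simp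
  then show ?case using r Suc.IH by simp
qed

lemma in_l_simps[simp]: "in_l l (Plain k) \<longleftrightarrow> k \<in> {1..l}" "\<not> in_l l (Weighted r k)"
  "\<not> in_l l EStar" "\<not> in_l l AStar"
  by (auto simp: in_l_def)

lemma weighted_l_simps[simp]: "weighted_l l (Weighted r k) \<longleftrightarrow> k \<in> {1..l}" "\<not> weighted_l l (Plain k)"
  "\<not> weighted_l l EStar" "\<not> weighted_l l AStar"
  by (auto simp: weighted_l_def)

context tsetup
begin

lemma STEP_props:
  assumes "CONT (Suc t)"
  shows "(in_l l (the (v (Suc t))) \<longrightarrow> jj (Suc t) = jj t \<and> (Entr (ee t), Exit (ee (Suc t))) \<in> edges E)
       \<and> (weighted_l l (the (v (Suc t))) \<longrightarrow> jj t < jj (Suc t) \<and> jj (Suc t) \<le> jj t + card Q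
            \<and> (\<exists>q. (Pos q, Exit (ee (Suc t))) \<in> edges E))"
proof -
  obtain M k where M1: "1 \<le> M" and bd: "M - 1 \<le> card Q" and kl: "k \<in> {1..l}" and ee': "ee (Suc t) = k"
    and jjS: "jj (Suc t) = jj t + (M - 1)"
    and vS: "the (v (Suc t)) = (if M = 1 then Plain k else Weighted (\<Sum>j=1..M-1. posw E (the (itr E (Entr (ee t)) j))) k)"
    and hM: "itr E (Entr (ee t)) M = Some (Exit k)"
    and inner: "\<forall>r\<in>{1..<M}. \<exists>q. itr E (Entr (ee t)) r = Some (Pos q)"
    using STEP[OF assms] by blast
  obtain M' where M': "M = Suc M'" using M1 by (cases M) auto
  obtain z where z: "itr E (Entr (ee t)) M' = Some z" "(z, Exit k) \<in> edges E"
    using itr_pred[of "Entr (ee t)" M' "Exit k"] hM M' by auto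
  show ?thesis
  proof (cases "M = 1")
    case True
    then have "M' = 0" using M' by simp
    then have "z = Entr (ee t)" using z(1) by simp
    then show ?thesis using vS True jjS z(2) ee' kl by simp
  next
    case False
    then have "M' \<in> {1..<M}" using M' by simp
    then obtain q where "itr E (Entr (ee t)) M' = Some (Pos q)" using inner by blast
    then have "z = Pos q" using z(1) by simp
    then have "(Pos q, Exit (ee (Suc t))) \<in> edges E" using z(2) ee' by simp
    moreover have "jj t < jj (Suc t)" "jj (Suc t) \<le> jj t + card Q" using jjS bd False M1 by auto
    ultimately show ?thesis using vS False kl by auto
  qed
qed

lemma CONT_mono: "CONT t \<Longrightarrow> u \<le> t \<Longrightarrow> CONT u"
  unfolding CONT_def by auto

lemma CONT_cont: "CONT t \<Longrightarrow> u \<in> {1..t} \<Longrightarrow> \<exists>y. v u = Some y \<and> cont l y"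
  unfolding CONT_def by auto

lemma v_Suc_pos: "1 \<le> u \<Longrightarrow> v (Suc u) = Option.bind (v u) (tstep l (play_den E))"
  by (simp add: tdp.simps(2))

lemma no_loop:
  assumes allC: "\<And>t. CONT t"
  shows "infinite {j. 1 \<le> j \<and> weighted_l l (the (v j))}" (is "infinite ?J")
proof
  assume fin: "finite ?J"
  define t0 where "t0 = (if ?J = {} then 0 else Max ?J)"
  have t0M: "t0 = Max ?J" if ne: "?J \<noteq> {}" unfolding t0_def if_not_P[OF ne] ..
  have t00: "t0 = 0" if e: "?J = {}" unfolding t0_def if_P[OF e] ..
  have above: "in_l l (the (v b))" if "t0 < b" for b
  proof -
    have nb: "b \<notin> ?J"
    proof
      assume "b \<in> ?J"
      then have "b \<le> Max ?J" using fin by simp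
      moreover have "?J \<noteq> {}" using \<open>b \<in> ?J\<close> by blast
      ultimately show False using that t0M by simp
    qed
    have b1: "b \<in> {1..b}" using that by simp
    obtain y where y: "v b = Some y" "cont l y" using CONT_cont[OF allC b1] by blast
    then show ?thesis using nb b1 unfolding cont_def by auto
  qed
  have edge: "(Entr (ee (b - 1)), Exit (ee b)) \<in> edges E" if tb: "t0 < b" for b
  proof -
    obtain b' where b': "b = Suc b'" using tb by (cases b) auto
    show ?thesis using STEP_props[OF allC[of "Suc b'"]] above[OF tb] b' by simp
  qed
  have eeb: "ee b \<in> {1..l}" if "t0 < b" for b
  proof -
    have b1: "b \<in> {1..b}" using that by simp
    obtain y where y: "v b = Some y" "cont l y" using CONT_cont[OF allC b1] by blast
    then show ?thesis using cont_tidx[OF y(2)] unfolding ee_def by simp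
  qed
  have t0cases: "t0 = 0 \<or> (1 \<le> t0 \<and> weighted_l l (the (v t0)))"
  proof (cases "?J = {}")
    case True then show ?thesis using t00 by simp
  next
    case False
    then have "t0 \<in> ?J" using t0M fin Max_in by metis
    then show ?thesis by simp
  qed
  have claim: "\<And>b. t0 + d < b \<Longrightarrow> ee (t0 + d) \<noteq> ee b" for d
  proof (induction d)
    case 0
    fix b assume b: "t0 + 0 < b"
    then have tb: "t0 < b" by simp
    show "ee (t0 + 0) \<noteq> ee b"
    proof
      assume eq: "ee (t0 + 0) = ee b"
      from t0cases show False
      proof
        assume "t0 = 0"
        then have "ee (t0 + 0) = l + i" by (simp add: ee_def)
        then show False using eq eeb[OF tb] iin by simp
      next
        assume w: "1 \<le> t0 \<and> weighted_l l (the (v t0))"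
        then obtain t0' where t0': "t0 = Suc t0'" by (cases t0) auto
        obtain q where q: "(Pos q, Exit (ee t0)) \<in> edges E"
          using STEP_props[OF allC[of "Suc t0'"]] w t0' by auto
        have "(Entr (ee (b - 1)), Exit (ee t0)) \<in> edges E" using edge[OF tb] eq by simp
        from exit_uniq[OF q this] show False by simp
      qed
    qed
  next
    case (Suc d)
    fix b assume b: "t0 + Suc d < b"
    show "ee (t0 + Suc d) \<noteq> ee b"
    proof
      assume eq: "ee (t0 + Suc d) = ee b"
      have e1: "(Entr (ee (t0 + Suc d - 1)), Exit (ee (t0 + Suc d))) \<in> edges E" by (rule edge) simp
      have e2: "(Entr (ee (b - 1)), Exit (ee (t0 + Suc d))) \<in> edges E" using edge[of b] b eq by simp
      have "ee (t0 + Suc d - 1) = ee (b - 1)" using exit_uniq[OF e1 e2] by simp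
      then have "ee (t0 + d) = ee (b - 1)" by simp
      moreover have "t0 + d < b - 1" using b by simp
      ultimately show False using Suc.IH by blast
    qed
  qed
  have inj: "inj_on ee {t0+1..t0+l+1}"
  proof (rule inj_onI)
    fix a b assume a: "a \<in> {t0+1..t0+l+1}" and b: "b \<in> {t0+1..t0+l+1}" and eq: "ee a = ee b"
    show "a = b"
    proof (rule ccontr)
      assume "a \<noteq> b"
      then consider "a < b" | "b < a" by linarith
      then show False
      proof cases
        case 1
        have "ee (t0 + (a - t0)) \<noteq> ee b" by (rule claim) (use 1 a in simp)
        then show False using eq a by simp
      next
        case 2
        have "ee (t0 + (b - t0)) \<noteq> ee a" by (rule claim) (use 2 b in simp)
        then show False using eq b by simp
      qed
    qed
  qed
  have sub: "ee ` {t0+1..t0+l+1} \<subseteq> {1..l}" using eeb by auto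
  have "card {t0+1..t0+l+1} \<le> card {1..l}" using card_inj_on_le[OF inj sub] by simp
  then show False by simp
qed

end

context tsetup
begin

lemma sumseg:
  assumes "Inv J0 (Entr e)" "\<And>r. r \<in> {1..R} \<Longrightarrow> \<exists>q. itr E (Entr e) r = Some (Pos q)"
  shows "(\<Sum>j=1..J0 + R. xs j) = (\<Sum>j=1..J0. xs j) + (\<Sum>r=1..R. posw E (the (itr E (Entr e) r)))"
proof -
  have "(\<Sum>j=1..J0 + R. xs j) = (\<Sum>j=1..J0. xs j) + (\<Sum>r=1..R. xs (J0 + r))" by (rule sum_shift_nat)
  also have "(\<Sum>r=1..R. xs (J0 + r)) = (\<Sum>r=1..R. posw E (the (itr E (Entr e) r)))"
  proof (rule sum.cong)
    fix r assume r: "r \<in> {1..R}"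
    then have "p (J0 + r) = itr E (Entr e) r" using Multi[of J0 "Entr e" R r, OF assms(1) assms(2)] r by simp
    then show "xs (J0 + r) = posw E (the (itr E (Entr e) r))" using posw_T by simp
  qed simp
  finally show ?thesis .
qed

lemma main_fin:
  assumes ex: "\<exists>j. v j = None"
  shows "play_den TT i = tdp_den l v"
proof -
  have ex': "\<exists>j. v (Suc j) = None"
  proof -
    obtain j where j: "v j = None" using ex by blast
    then have "j \<noteq> 0" by (cases j) auto
    then obtain j' where "j = Suc j'" by (cases j) auto
    then show ?thesis using j by blast
  qed
  define K where "K = (LEAST j. v (Suc j) = None)"
  have hK: "v (Suc K) = None" unfolding K_def using ex' by (rule LeastI_ex)
  have hmin: "j < K \<Longrightarrow> v (Suc j) \<noteq> None" for j unfolding K_def by (rule not_less_Least)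
  have K1: "K \<noteq> 0"
  proof
    assume "K = 0"
    then have "v (Suc K) = Some (play_den E (l + i))" by (simp add: tdp.simps(2))
    then show False using hK by simp
  qed
  obtain K' where K': "K = Suc K'" using K1 by (cases K) auto
  have cK': "CONT K'"
    unfolding CONT_def
  proof
    fix u assume u: "u \<in> {1..K'}"
    obtain u' where u': "u = Suc u'" using u by (cases u) auto
    have "v u \<noteq> None" using hmin[of u'] u' u K' by simp
    then obtain y where y: "v u = Some y" by blast
    have "v (Suc u) \<noteq> None" using hmin[of u] u K' by simp
    then have "cont l y"
      using v_Suc_pos[of u] u y tstep_not_cont[of l y "play_den E"] by force
    then show "\<exists>y. v u = Some y \<and> cont l y" using y by blast
  qed
  have vK: "v K = Some (play_den E (ee K'))" and e: "ee K' \<in> {1..l+m}" using v_next[OF cK'] K' by auto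
  define e0 where "e0 = ee K'"
  define y where "y = play_den E e0"
  have ncy: "\<not> cont l y"
  proof
    assume "cont l y"
    then have "v (Suc K) = Some (play_den E (tidx y))" using v_Suc_pos[of K] K1 vK tstep_cont y_def e0_def by simp
    then show False using hK by simp
  qed
  note I = INV[OF cK']
  define J0 where "J0 = jj K'"
  have inv0: "Inv J0 (Entr e0)" using I J0_def e0_def by simp
  have td: "tdp_den l v =
    (let S = (\<Sum>j=1..K. twt (the (v j))) in
        case y of
          EStar \<Rightarrow> EStar
        | AStar \<Rightarrow> AStar
        | Plain x \<Rightarrow> (if x > l \<and> (\<forall>j\<in>{1..<K}. in_l l (the (v j))) then Plain (x - l)
                     else if x > l \<and> (\<exists>j\<in>{1..<K}. weighted_l l (the (v j))) then Weighted S (x - l)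
                     else undefined)
        | Weighted r x \<Rightarrow> (if x > l then Weighted S (x - l) else undefined))"
    using TDa[of l "play_den E" i K y] vK hK y_def e0_def by simp
  have SK: "(\<Sum>j=1..K. twt (the (v j))) = (\<Sum>j=1..J0. xs j) + twt y"
    using I K' vK y_def e0_def J0_def by simp
  have allin: "(\<forall>j\<in>{1..<K}. in_l l (the (v j))) \<longleftrightarrow> J0 = 0"
    using I K' J0_def by (simp add: atLeastLessThanSuc_atLeastAtMost)
  have someW: "J0 \<noteq> 0 \<Longrightarrow> (\<exists>j\<in>{1..<K}. weighted_l l (the (v j)))"
  proof -
    assume "J0 \<noteq> 0"
    then obtain j where j: "j \<in> {1..<K}" "\<not> in_l l (the (v j))" using allin by blast
    then have "j \<in> {1..K'}" using K' by auto
    then obtain y' where y': "v j = Some y'" "cont l y'" using CONT_cont[OF cK'] by blast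
    then have "weighted_l l (the (v j))" using j unfolding cont_def by auto
    then show ?thesis using j(1) by blast
  qed
  let ?x = "Entr e0"
  from SEG[OF e[folded e0_def]] consider
    (c1) M k where "1 \<le> M" "itr E ?x M = Some (Exit k)" "itr E ?x (Suc M) = None"
      "\<forall>r\<in>{1..<M}. \<exists>q. itr E ?x r = Some (Pos q)" "k \<in> {1..l+n}"
  | (c2) M q where "1 \<le> M" "itr E ?x M = Some (Pos q)" "itr E ?x (Suc M) = None"
      "\<forall>r\<in>{1..M}. \<exists>q. itr E ?x r = Some (Pos q)"
  | (c3) "\<forall>r. 1 \<le> r \<longrightarrow> (\<exists>q. itr E ?x r = Some (Pos q))"
    by blast
  then show ?thesis
  proof cases
    case (c1 M k)
    note M1 = c1(1) and hM = c1(2) and hS = c1(3) and inner = c1(4) and kr = c1(5)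
    have pd: "y = (if M = 1 then Plain k else Weighted (\<Sum>j=1..M-1. posw E (the (itr E ?x j))) k)"
      unfolding y_def by (rule PD1[OF M1 hM hS])
    have lk: "l < k"
    proof (rule ccontr)
      assume "\<not> l < k"
      then have "k \<in> {1..l}" using kr by simp
      then show False using ncy pd by (cases "M = 1") auto
    qed
    obtain M' where M': "M = Suc M'" using M1 by (cases M) auto
    obtain z where z: "itr E ?x M' = Some z" "(z, Exit k) \<in> edges E"
      using itr_pred[of ?x M' "Exit k"] hM M' by auto
    have inner': "\<And>r. r \<in> {1..M'} \<Longrightarrow> \<exists>q. itr E ?x r = Some (Pos q)" using inner M' by auto
    have "Inv (J0 + M') z" using Multi[of J0 "Entr e0" M' M', OF inv0 inner' order_refl] z(1) by simp
    note pp = S3[OF this z(2) lk]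
    have p1: "p (Suc (J0 + M')) = Some (Exit (k - l))" by (rule conjunct1[OF pp])
    have p2: "p (Suc (Suc (J0 + M'))) = None" by (rule conjunct2[OF pp])
    have lhs: "play_den TT i = (if Suc (J0 + M') = 1 then Plain (k - l)
        else if Suc (J0 + M') \<ge> 2 then Weighted (\<Sum>j=1..Suc (J0 + M')-1. xs j) (k - l) else undefined)"
      by (rule PDa[OF p1 p2])
    have ss: "(\<Sum>j=1..Suc (J0 + M')-1. xs j) = (\<Sum>j=1..J0. xs j) + (\<Sum>r=1..M'. posw E (the (itr E ?x r)))"
      using sumseg[of J0 e0 M', OF inv0 inner'] by simp
    show ?thesis
    proof (cases "M = 1")
      case True
      then have M0: "M' = 0" using M' by simp
      have yP: "y = Plain k" using pd True by simp
      show ?thesis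
      proof (cases "J0 = 0")
        case True
        then show ?thesis using lhs td yP lk M0 allin by simp
      next
        case False
        then show ?thesis using lhs td yP lk M0 allin someW[OF False] SK ss by (simp add: Let_def)
      qed
    next
      case False
      then have yW: "y = Weighted (\<Sum>j=1..M'. posw E (the (itr E ?x j))) k" using pd M' by simp
      have "M' \<noteq> 0" using False M' by simp
      then show ?thesis using lhs td yW lk SK ss by (simp add: Let_def)
    qed
  next
    case (c2 M q)
    note M1 = c2(1) and hM = c2(2) and hS = c2(3) and inner = c2(4)
    have pd: "y = (if role E q = PAll then EStar else AStar)"
      unfolding y_def by (rule PD2[OF hM hS])
    have inner': "\<And>r. r \<in> {1..M} \<Longrightarrow> \<exists>q. itr E ?x r = Some (Pos q)" using inner by auto
    have mm: "Inv (J0 + M) (Pos q) \<and> p (J0 + M) = Some (Pos q)"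
      using Multi[of J0 "Entr e0" M M, OF inv0 inner' order_refl] hM M1 by simp
    have "succ E (Pos q) = None" using hS hM by simp
    then have "\<nexists>y. (Pos q, y) \<in> edges E" using succ_None_iff by blast
    then have p2: "p (Suc (J0 + M)) = None" using S4 mm by blast
    have lhs: "play_den TT i = (if role TT q = PAll then EStar else AStar)"
      using PDb[of TT i "J0 + M" q] mm p2 by simp
    show ?thesis using lhs td pd role_T by (cases "role E q = PAll") (simp_all add: Let_def)
  next
    case c3
    have inner': "r \<in> {1..R} \<Longrightarrow> \<exists>q. itr E ?x r = Some (Pos q)" for r R using c3 by auto
    have pr: "p (J0 + r) = itr E ?x r" if "1 \<le> r" for r
      using Multi[of J0 "Entr e0" r r, OF inv0 inner'[of _ r] order_refl] that by simp
    have allp: "p j \<noteq> None" for j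
    proof (cases "j \<le> J0")
      case True
      have "p J0 \<noteq> None" using inv0 unfolding Inv_def by auto
      then show ?thesis using True play_None_mono[of TT i j J0] by (metis (no_types))
    next
      case False
      then have "p (J0 + (j - J0)) = itr E ?x (j - J0)" using pr[of "j - J0"] by simp
      moreover have "1 \<le> j - J0" using False by simp
      then have "itr E ?x (j - J0) \<noteq> None" using c3 by blast
      ultimately show ?thesis using False by simp
    qed
    have lhs: "play_den TT i = (if mp_ok xs then EStar else AStar)"
      using PDc[of TT i] allp by simp
    have "itr E ?x r \<noteq> None" for r
    proof (cases "r = 0")
      case True then show ?thesis by simp
    next
      case False then have "1 \<le> r" by simp
      then show ?thesis using c3 by blast
    qed
    then have pd: "y = (if mp_ok (\<lambda>j. posw E (the (itr E ?x j))) then EStar else AStar)"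
      unfolding y_def by (rule PD3)
    have "mp_ok xs \<longleftrightarrow> mp_ok (\<lambda>j. posw E (the (itr E ?x j)))"
    proof (rule mp_ok_shift)
      fix N
      show "(\<Sum>j=1..N + J0. xs j) = (\<Sum>j=1..J0. xs j) + (\<Sum>j=1..N. posw E (the (itr E ?x j)))"
        using sumseg[of J0 e0 N, OF inv0 inner'[of _ N]] by (simp only: add.commute[of N J0])
    qed
    then show ?thesis using lhs pd td by (simp add: Let_def)
  qed
qed

end

context tsetup
begin

lemma p_pos_in_Q: "p j = Some s \<Longrightarrow> s = Pos q \<Longrightarrow> q \<in> Q"
proof (cases j)
  case 0
  assume "p j = Some s" "s = Pos q"
  then show ?thesis using 0 by simp
next
  case (Suc j')
  assume a: "p j = Some s" "s = Pos q"
  then have "Option.bind (p j') (succ TT) = Some s" using Suc by simp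
  then obtain s' where "p j' = Some s'" "succ TT s' = Some s" by (metis bind_eq_Some_conv)
  then have "(s', s) \<in> edges TT" using succT_iff by simp
  then have "s \<in> tgts n Q" unfolding edgesT_iff by simp
  then show ?thesis using a(2) by simp
qed

lemma xs_bound:
  assumes "p j \<noteq> None"
  shows "\<bar>xs j\<bar> \<le> (\<Sum>q\<in>Q. \<bar>wt E q\<bar>)"
proof -
  obtain s where s: "p j = Some s" using assms by blast
  have nn: "0 \<le> (\<Sum>q\<in>Q. \<bar>wt E q\<bar>)" by (rule sum_nonneg) simp
  show ?thesis
  proof (cases s)
    case (Pos q)
    then have q: "q \<in> Q" using p_pos_in_Q s by blast
    have "\<bar>wt E q\<bar> \<le> (\<Sum>q\<in>Q. \<bar>wt E q\<bar>)"
      by (rule member_le_sum[OF q]) (simp_all add: finQ)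
    moreover have "wt TT = wt E" by (simp add: trace_def)
    ultimately show ?thesis using s Pos by simp
  qed (use s nn posw_T in simp_all)
qed

lemma main_inf:
  assumes all: "\<And>j. v j \<noteq> None"
  shows "play_den TT i = tdp_den l v"
proof -
  have allC: "CONT t" for t
  proof (induction t)
    case 0 then show ?case by (rule CONT_0)
  next
    case (Suc t)
    obtain y where y: "v (Suc t) = Some y" using all[of "Suc t"] by blast
    have "cont l y"
    proof (rule ccontr)
      assume "\<not> cont l y"
      then have "v (Suc (Suc t)) = None" using v_Suc_pos[of "Suc t"] y tstep_not_cont by simp
      then show False using all by blast
    qed
    then show ?case using CONT_Suc Suc.IH y by blast
  qed
  define J where "J = {j. 1 \<le> j \<and> weighted_l l (the (v j))}"
  have infJ: "infinite J" unfolding J_def by (rule no_loop[OF allC])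
  have Jsub: "J \<subseteq> {1..}" unfolding J_def by auto
  have nJ: "in_l l (the (v t))" if "1 \<le> t" "t \<notin> J" for t
  proof -
    have t1: "t \<in> {1..t}" using that by simp
    obtain y where y: "v t = Some y" "cont l y" using CONT_cont[OF allC t1] by blast
    then show ?thesis using that unfolding J_def cont_def by auto
  qed
  have jjmono: "t \<le> t' \<Longrightarrow> jj t \<le> jj t'" for t t'
    by (rule lift_Suc_mono_le[of jj]) simp_all
  have wstep: "jj t' < jj (Suc t') \<and> jj (Suc t') \<le> jj t' + card Q" if "Suc t' \<in> J" for t'
    using STEP_props[OF allC[of "Suc t'"]] that unfolding J_def by auto
  have pstep: "jj (Suc t') = jj t'" if "Suc t' \<notin> J" for t'
    using STEP_props[OF allC[of "Suc t'"]] nJ[of "Suc t'"] that by auto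
  have unb: "\<exists>t. N \<le> jj t" for N
  proof (induction N)
    case 0 then show ?case by simp
  next
    case (Suc N)
    then obtain t where t: "N \<le> jj t" by blast
    obtain b where b: "b > t" "b \<in> J" using infJ unfolding infinite_nat_iff_unbounded by blast
    obtain b' where b': "b = Suc b'" using b(1) by (cases b) auto
    have "jj t \<le> jj b'" using b b' by (intro jjmono) simp
    moreover have "jj b' < jj b" using wstep[of b'] b b' by simp
    ultimately show ?case using t by (intro exI[of _ b]) simp
  qed
  have allp: "p j \<noteq> None" for j
  proof -
    obtain t where t: "j \<le> jj t" using unb by blast
    have "p (jj t) \<noteq> None" using conjunct1[OF INV[OF allC[of t]]] unfolding Inv_def by auto
    then show ?thesis using t play_None_mono[of TT i j "jj t"] by (metis (no_types))
  qed
  have lhs: "play_den TT i = (if mp_ok xs then EStar else AStar)"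
    using PDc[of TT i] allp by simp
  define w' where "w' = (\<lambda>t. twt (the (v (Infinite_Set.enumerate J (t - 1)))))"
  have rhs: "tdp_den l v = (if mp_ok w' then EStar else AStar)"
    using TDc[of l "play_den E" i] all infJ unfolding J_def w'_def by (simp add: Let_def)
  have flat: "jj (a + d) = jj a" if "\<And>t. a < t \<Longrightarrow> t < b \<Longrightarrow> t \<notin> J" "a + d < b" for a b d
    using that(2)
  proof (induction d)
    case 0 then show ?case by simp
  next
    case (Suc d)
    have "a + Suc d \<notin> J" using that(1) Suc.prems by simp
    then have "jj (Suc (a + d)) = jj (a + d)" using pstep[of "a + d"] by simp
    then show ?case using Suc by simp
  qed
  have grp: "jj (tau J U) < jj (tau J (Suc U)) \<and> jj (tau J (Suc U)) \<le> jj (tau J U) + card Q" for U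
  proof -
    let ?a = "tau J U" and ?b = "tau J (Suc U)"
    have ab: "?a < ?b" by (rule tau_lt[OF infJ Jsub])
    have bJ: "?b \<in> J" using enumerate_in_set[OF infJ] by simp
    have gap: "\<And>t. ?a < t \<Longrightarrow> t < ?b \<Longrightarrow> t \<notin> J" using tau_gap[OF infJ] by blast
    obtain b' where b': "?b = Suc b'" using ab by (cases ?b) auto
    have ab': "?a \<le> b'" using ab b' by simp
    have lt: "?a + (b' - ?a) < ?b" using ab' b' by simp
    have "jj (?a + (b' - ?a)) = jj ?a" by (rule flat[OF gap lt])
    then have "jj b' = jj ?a" using ab b' by simp
    then show ?thesis using wstep[of b'] bJ b' by simp
  qed
  have "mp_ok xs \<longleftrightarrow> mp_ok w'"
  proof (rule mp_ok_group[where c = "\<lambda>U. jj (tau J U)" and C = "card Q" and B = "\<Sum>q\<in>Q. \<bar>wt E q\<bar>"])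
    show "jj (tau J 0) = 0" by simp
    show "\<And>U. jj (tau J U) < jj (tau J (Suc U))" using grp by blast
    show "\<And>U. jj (tau J (Suc U)) \<le> jj (tau J U) + card Q" using grp by blast
    show "\<And>j. \<bar>xs j\<bar> \<le> (\<Sum>q\<in>Q. \<bar>wt E q\<bar>)" using xs_bound allp by blast
    fix U
    have zero: "twt (the (v t)) = 0" if t1: "1 \<le> t" and t2: "t \<notin> J" for t
    proof -
      obtain k where "the (v t) = Plain k" using nJ[OF t1 t2] unfolding in_l_def by blast
      then show ?thesis by simp
    qed
    have "(\<Sum>u=1..U. w' u) = (\<Sum>t=1..tau J U. twt (the (v t)))"
      unfolding w'_def by (rule enum_sum[OF infJ Jsub zero])
    also have "\<dots> = (\<Sum>j=1..jj (tau J U). xs j)" using INV[OF allC[of "tau J U"]] by simp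
    finally show "(\<Sum>u=1..U. w' u) = (\<Sum>j=1..jj (tau J U). xs j)" .
  qed
  then show ?thesis using lhs rhs by simp
qed

end

theorem proposition3p6:
  fixes E :: "'q roMPG" and l m n i :: nat
  assumes "is_roPG E" and "ent E = l + m" and "ex E = l + n" and "i \<in> {1..m}"
  shows "play_den (trace l m n E) i = tdp_den l (tdp l (play_den E) i)"
proof -
  interpret tsetup E l m n i using assms by unfold_locales
  show ?thesis
  proof (cases "\<exists>j. tdp l (play_den E) i j = None")
    case True then show ?thesis by (rule main_fin)
  next
    case False
    have "tdp l (play_den E) i j \<noteq> None" for j using False by auto
    then show ?thesis by (rule main_inf)
  qed
qed


end
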